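(* Let $m,n\in\mathbb{N}$, $s_1,\dots,s_n\in\mathbb{C}$ (nonzero in the discrete case), $\boldsymbol{u}_j,\boldsymbol{v}_j\in\mathbb{C}^m$, and define $k_{jl}=\boldsymbol{v}_j^\intercal\boldsymbol{u}_l/(s_j+s_l^* )$ in the continuous case (assuming $s_j+s_l^*\neq0$) and $k_{jl}=\boldsymbol{v}_j^\intercal\boldsymbol{u}_l/(1-s_js_l^* )$ in the discrete case (assuming $s_js_l^*\neq1$); set $\eta=0$ (continuous) or $\eta=1$ (discrete). Fix $i\in\{1,\dots,n\}$ with $k_{ii}\neq0$ and suppose $K_1=(k_{jl})_{j,l=1}^{i-1}$ is invertible. Define $$\boldsymbol{u}_i^{(-)}=\boldsymbol{u}_i-\sum_{j,k=1}^{i-1}\boldsymbol{u}_j(K_1^{-1})_{jk}k_{ki},\qquad \boldsymbol{v}_i^{(-)}=s_i^{\eta}\Big(s_i^{-\eta}\boldsymbol{v}_i-\sum_{j,k=1}^{i-1}k_{ij}(K_1^{-1})_{jk}s_k^{-\eta}\boldsymbol{v}_k\Big),$$ $$\gamma_i^{(-)}=\frac{1}{k_{ii}}\Big(k_{ii}-\sum_{j,k=1}^{i-1}k_{ij}(K_1^{-1})_{jk}k_{ki}\Big).$$ Then $\boldsymbol{v}_i^{(-)\intercal}\boldsymbol{u}_i^{(-)}=\gamma_i^{(-)}\,\boldsymbol{v}_i^\intercal\boldsymbol{u}_i$.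
   Context: ${}^*$ denotes complex conjugation and ${}^\intercal$ transposition. For $i=1$ the sums are empty. *)

theory Defs
  imports Complex_Main "Jordan_Normal_Form.Gauss_Jordan_Elimination"
begin

text \<open>Vectors in C^m are represented as functions nat => complex, components 0..m-1.
  bil m v w is the bilinear (unconjugated) product v^T w.\<close>
definition bil :: "nat \<Rightarrow> (nat \<Rightarrow> complex) \<Rightarrow> (nat \<Rightarrow> complex) \<Rightarrow> complex" where
  "bil m v w = (\<Sum>c<m. v c * w c)"

definition kcoef :: "bool \<Rightarrow> nat \<Rightarrow> (nat \<Rightarrow> complex) \<Rightarrow> (nat \<Rightarrow> nat \<Rightarrow> complex)
    \<Rightarrow> (nat \<Rightarrow> nat \<Rightarrow> complex) \<Rightarrow> nat \<Rightarrow> nat \<Rightarrow> complex" where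
  "kcoef disc m s u v j l = bil m (v j) (u l) /
     (if disc then 1 - s j * cnj (s l) else s j + cnj (s l))"

definition mat_inv :: "complex mat \<Rightarrow> complex mat" where
  "mat_inv A = the (mat_inverse A)"

end

theory Submission imports Defs begin

lemma inv_props:
  fixes A :: "complex mat"
  assumes A: "A \<in> carrier_mat n n" and inv: "invertible_mat A"
  shows "A * mat_inv A = 1\<^sub>m n \<and> mat_inv A * A = 1\<^sub>m n \<and> mat_inv A \<in> carrier_mat n n"
proof -
  from inv obtain B where AB: "A * B = 1\<^sub>m (dim_row A)" and BA: "B * A = 1\<^sub>m (dim_row B)"
    unfolding invertible_mat_def inverts_mat_def by auto
  have Bc: "B \<in> carrier_mat n n"
  proof -
    have "dim_col B = n" using AB A by (metis index_mult_mat(3) index_one_mat(3) carrier_matD(1))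
    moreover have "dim_row B = n" using BA A by (metis index_mult_mat(3) index_one_mat(3) carrier_matD(2))
    ultimately show ?thesis by auto
  qed
  have U: "A \<in> Units (ring_mat TYPE(complex) n ())"
    unfolding Units_def ring_mat_simps using A Bc AB BA by auto
  have "mat_inverse A \<noteq> None" using mat_inverse(1)[OF A, of "()"] U by blast
  then obtain C where "mat_inverse A = Some C" by auto
  then show ?thesis using mat_inverse(2)[OF A] unfolding mat_inv_def by auto
qed

lemma bil_diff_l: "bil m (\<lambda>c. f c - g c) w = bil m f w - bil m g w"
  unfolding bil_def by (simp add: algebra_simps sum_subtractf)
lemma bil_diff_r: "bil m w (\<lambda>c. f c - g c) = bil m w f - bil m w g"
  unfolding bil_def by (simp add: algebra_simps sum_subtractf)
lemma bil_sum_l: "bil m (\<lambda>c. \<Sum>q\<in>I. a q * V q c) w = (\<Sum>q\<in>I. a q * bil m (V q) w)"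
proof -
  have "bil m (\<lambda>c. \<Sum>q\<in>I. a q * V q c) w = (\<Sum>c<m. \<Sum>q\<in>I. a q * (V q c * w c))"
    unfolding bil_def by (simp add: sum_distrib_right mult.assoc)
  also have "\<dots> = (\<Sum>q\<in>I. \<Sum>c<m. a q * (V q c * w c))" by (rule sum.swap)
  also have "\<dots> = (\<Sum>q\<in>I. a q * bil m (V q) w)" unfolding bil_def by (simp add: sum_distrib_left)
  finally show ?thesis .
qed
lemma bil_sum_r: "bil m w (\<lambda>c. \<Sum>q\<in>I. a q * V q c) = (\<Sum>q\<in>I. a q * bil m w (V q))"
proof -
  have "bil m w (\<lambda>c. \<Sum>q\<in>I. a q * V q c) = (\<Sum>c<m. \<Sum>q\<in>I. a q * (w c * V q c))"
    unfolding bil_def by (simp add: sum_distrib_left mult.left_commute)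
  also have "\<dots> = (\<Sum>q\<in>I. \<Sum>c<m. a q * (w c * V q c))" by (rule sum.swap)
  also have "\<dots> = (\<Sum>q\<in>I. a q * bil m w (V q))" unfolding bil_def by (simp add: sum_distrib_left)
  finally show ?thesis .
qed
lemma bil_scal_l: "bil m (\<lambda>c. a * f c) w = a * bil m f w"
  unfolding bil_def by (simp add: sum_distrib_left mult.assoc)

lemma core:
  fixes V U k :: "nat \<Rightarrow> nat \<Rightarrow> complex" and x y \<alpha> \<beta> :: "nat \<Rightarrow> complex"
  assumes P: "\<And>a b. a \<in> insert i I \<Longrightarrow> b \<in> insert i I \<Longrightarrow> bil m (V a) (U b) = (x a + y b) * k a b"
    and ha: "\<And>l. l \<in> I \<Longrightarrow> (\<Sum>q\<in>I. \<alpha> q * k q l) = k i l"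
    and hb: "\<And>l. l \<in> I \<Longrightarrow> (\<Sum>j\<in>I. k l j * \<beta> j) = k l i"
    and hc: "(\<Sum>q\<in>I. \<alpha> q * k q i) = (\<Sum>j\<in>I. k i j * \<beta> j)"
  shows "bil m (\<lambda>c. V i c - (\<Sum>q\<in>I. \<alpha> q * V q c)) (\<lambda>c. U i c - (\<Sum>j\<in>I. \<beta> j * U j c))
     = (x i + y i) * (k i i - (\<Sum>j\<in>I. k i j * \<beta> j))"
proof -
  define c where "c = (\<Sum>j\<in>I. k i j * \<beta> j)"
  define A where "A = (\<Sum>q\<in>I. \<alpha> q * x q * k q i)"
  define B where "B = (\<Sum>j\<in>I. \<beta> j * y j * k i j)"
  have T1: "bil m (V i) (U i) = (x i + y i) * k i i" using P by auto
  have T2: "(\<Sum>j\<in>I. \<beta> j * bil m (V i) (U j)) = x i * c + B"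
  proof -
    have "(\<Sum>j\<in>I. \<beta> j * bil m (V i) (U j)) = (\<Sum>j\<in>I. x i * (k i j * \<beta> j) + \<beta> j * y j * k i j)"
      by (rule sum.cong) (auto simp: P algebra_simps)
    then show ?thesis by (simp add: c_def B_def sum.distrib sum_distrib_left)
  qed
  have T3: "(\<Sum>q\<in>I. \<alpha> q * bil m (V q) (U i)) = A + y i * c"
  proof -
    have "(\<Sum>q\<in>I. \<alpha> q * bil m (V q) (U i)) = (\<Sum>q\<in>I. \<alpha> q * x q * k q i + y i * (\<alpha> q * k q i))"
      by (rule sum.cong) (auto simp: P algebra_simps)
    then show ?thesis by (simp add: A_def sum.distrib sum_distrib_left[symmetric] hc c_def)
  qed
  have T4: "(\<Sum>q\<in>I. \<alpha> q * (\<Sum>j\<in>I. \<beta> j * bil m (V q) (U j))) = A + B"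
  proof -
    have "(\<Sum>q\<in>I. \<alpha> q * (\<Sum>j\<in>I. \<beta> j * bil m (V q) (U j)))
       = (\<Sum>q\<in>I. \<Sum>j\<in>I. \<alpha> q * x q * (k q j * \<beta> j) + \<beta> j * y j * (\<alpha> q * k q j))"
      by (rule sum.cong, simp, simp add: sum_distrib_left, rule sum.cong) (auto simp: P algebra_simps)
    also have "\<dots> = (\<Sum>q\<in>I. \<alpha> q * x q * (\<Sum>j\<in>I. k q j * \<beta> j)) + (\<Sum>j\<in>I. \<beta> j * y j * (\<Sum>q\<in>I. \<alpha> q * k q j))"
    proof -
      have e: "(\<Sum>q\<in>I. \<Sum>j\<in>I. \<beta> j * y j * (\<alpha> q * k q j)) = (\<Sum>j\<in>I. \<Sum>q\<in>I. \<beta> j * y j * (\<alpha> q * k q j))"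
        by (rule sum.swap)
      show ?thesis by (simp only: sum.distrib sum_distrib_left e)
    qed
    also have "\<dots> = A + B"
      unfolding A_def B_def by (simp add: hb ha)
    finally show ?thesis .
  qed
  have "bil m (\<lambda>c. V i c - (\<Sum>q\<in>I. \<alpha> q * V q c)) (\<lambda>c. U i c - (\<Sum>j\<in>I. \<beta> j * U j c))
      = bil m (V i) (U i) - (\<Sum>j\<in>I. \<beta> j * bil m (V i) (U j)) - (\<Sum>q\<in>I. \<alpha> q * bil m (V q) (U i))
        + (\<Sum>q\<in>I. \<alpha> q * (\<Sum>j\<in>I. \<beta> j * bil m (V q) (U j)))"
    by (simp add: bil_diff_l bil_diff_r bil_sum_l bil_sum_r)
  also have "\<dots> = (x i + y i) * (k i i - c)" by (simp add: T1 T2 T3 T4 algebra_simps)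
  finally show ?thesis by (simp add: c_def)
qed

theorem proposition6p9:
  fixes disc :: bool and m n i :: nat and s :: "nat \<Rightarrow> complex"
    and u v :: "nat \<Rightarrow> nat \<Rightarrow> complex"
  defines "eta \<equiv> (if disc then 1 else 0 :: int)"
    and "kk \<equiv> kcoef disc m s u v"
    and "K1 \<equiv> mat (i - 1) (i - 1) (\<lambda>(j, l). kcoef disc m s u v (Suc j) (Suc l))"
  assumes s_nz: "disc \<Longrightarrow> \<forall>j\<in>{1..n}. s j \<noteq> 0"
    and denom: "\<forall>j\<in>{1..n}. \<forall>l\<in>{1..n}.
        (if disc then s j * cnj (s l) \<noteq> 1 else s j + cnj (s l) \<noteq> 0)"
    and i_range: "i \<in> {1..n}"
    and kii: "kk i i \<noteq> 0"
    and K1_inv: "invertible_mat K1"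
  shows "bil m
      (\<lambda>c. s i powi eta * (s i powi (- eta) * v i c
          - (\<Sum>j=1..i-1. \<Sum>q=1..i-1. kk i j * mat_inv K1 $$ (j - 1, q - 1) * s q powi (- eta) * v q c)))
      (\<lambda>c. u i c - (\<Sum>j=1..i-1. \<Sum>q=1..i-1. u j c * mat_inv K1 $$ (j - 1, q - 1) * kk q i))
    = (1 / kk i i) * (kk i i - (\<Sum>j=1..i-1. \<Sum>q=1..i-1. kk i j * mat_inv K1 $$ (j - 1, q - 1) * kk q i))
      * bil m (v i) (u i)"
proof -
  define N where "N = i - 1"
  define I where "I = {1..N}"
  define Ki where "Ki = (\<lambda>j q. mat_inv K1 $$ (j - 1, q - 1))"
  define \<alpha> where "\<alpha> = (\<lambda>q. \<Sum>j\<in>I. kk i j * Ki j q)"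
  define \<beta> where "\<beta> = (\<lambda>j. \<Sum>q\<in>I. Ki j q * kk q i)"
  define V where "V = (\<lambda>a c. s a powi (- eta) * v a c)"
  define x where "x = (\<lambda>a. if disc then inverse (s a) else s a)"
  define y where "y = (\<lambda>b. if disc then - cnj (s b) else cnj (s b))"
  define D where "D = (\<lambda>a b. if disc then 1 - s a * cnj (s b) else s a + cnj (s b))"
  have K1c: "K1 \<in> carrier_mat N N" unfolding K1_def N_def by simp
  have Kfacts: "K1 * mat_inv K1 = 1\<^sub>m N" "mat_inv K1 * K1 = 1\<^sub>m N" "mat_inv K1 \<in> carrier_mat N N"
    using inv_props[OF K1c K1_inv] by auto
  have K1e: "K1 $$ (t, l) = kk (Suc t) (Suc l)" if "t < N" "l < N" for t l
    using that unfolding K1_def kk_def N_def by simp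
  have I_sub: "insert i I \<subseteq> {1..n}" using i_range unfolding I_def N_def by auto
  have delta1: "(\<Sum>q\<in>I. Ki j q * kk q l) = (if j = l then 1 else 0)" if "j \<in> I" "l \<in> I" for j l
  proof -
    have jl: "j - 1 < N" "l - 1 < N" "j \<ge> 1" "l \<ge> 1" using that unfolding I_def by auto
    have "(mat_inv K1 * K1) $$ (j - 1, l - 1) = (\<Sum>t<N. mat_inv K1 $$ (j - 1, t) * K1 $$ (t, l - 1))"
      using Kfacts(3) K1c jl by (simp add: scalar_prod_def lessThan_atLeast0)
    also have "\<dots> = (\<Sum>t<N. Ki j (Suc t) * kk (Suc t) l)"
      by (rule sum.cong) (use jl in \<open>auto simp: Ki_def K1e\<close>)
    also have "\<dots> = (\<Sum>q\<in>I. Ki j q * kk q l)"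
      unfolding I_def by (simp add: sum.atLeast1_atMost_eq)
    moreover have "(j - 1 = l - 1) = (j = l)" using jl by arith
    ultimately show ?thesis using Kfacts(2) jl by auto
  qed
  have delta2: "(\<Sum>q\<in>I. kk j q * Ki q l) = (if j = l then 1 else 0)" if "j \<in> I" "l \<in> I" for j l
  proof -
    have jl: "j - 1 < N" "l - 1 < N" "j \<ge> 1" "l \<ge> 1" using that unfolding I_def by auto
    have "(K1 * mat_inv K1) $$ (j - 1, l - 1) = (\<Sum>t<N. K1 $$ (j - 1, t) * mat_inv K1 $$ (t, l - 1))"
      using Kfacts(3) K1c jl by (simp add: scalar_prod_def lessThan_atLeast0)
    also have "\<dots> = (\<Sum>t<N. kk j (Suc t) * Ki (Suc t) l)"
      by (rule sum.cong) (use jl in \<open>auto simp: Ki_def K1e\<close>)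
    also have "\<dots> = (\<Sum>q\<in>I. kk j q * Ki q l)"
      unfolding I_def by (simp add: sum.atLeast1_atMost_eq)
    moreover have "(j - 1 = l - 1) = (j = l)" using jl by arith
    ultimately show ?thesis using Kfacts(1) jl by auto
  qed
  have fin: "finite I" unfolding I_def by simp
  have ha: "(\<Sum>q\<in>I. \<alpha> q * kk q l) = kk i l" if l: "l \<in> I" for l
  proof -
    have "(\<Sum>q\<in>I. \<alpha> q * kk q l) = (\<Sum>q\<in>I. \<Sum>j\<in>I. kk i j * (Ki j q * kk q l))"
      unfolding \<alpha>_def by (simp add: sum_distrib_right mult.assoc)
    also have "\<dots> = (\<Sum>j\<in>I. \<Sum>q\<in>I. kk i j * (Ki j q * kk q l))" by (rule sum.swap)
    also have "\<dots> = (\<Sum>j\<in>I. kk i j * (if j = l then 1 else 0))"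
      by (simp add: sum_distrib_left[symmetric] delta1 l)
    also have "\<dots> = (\<Sum>j\<in>I. if j = l then kk i l else 0)" by (rule sum.cong) auto
    also have "\<dots> = kk i l" using l fin by simp
    finally show ?thesis .
  qed
  have hb: "(\<Sum>j\<in>I. kk l j * \<beta> j) = kk l i" if l: "l \<in> I" for l
  proof -
    have "(\<Sum>j\<in>I. kk l j * \<beta> j) = (\<Sum>j\<in>I. \<Sum>q\<in>I. (kk l j * Ki j q) * kk q i)"
      unfolding \<beta>_def by (simp add: sum_distrib_left mult.assoc)
    also have "\<dots> = (\<Sum>q\<in>I. \<Sum>j\<in>I. (kk l j * Ki j q) * kk q i)" by (rule sum.swap)
    also have "\<dots> = (\<Sum>q\<in>I. (if l = q then 1 else 0) * kk q i)"
      by (simp add: sum_distrib_right[symmetric] delta2 l)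
    also have "\<dots> = (\<Sum>q\<in>I. if l = q then kk l i else 0)" by (rule sum.cong) auto
    also have "\<dots> = kk l i" using l fin by simp
    finally show ?thesis .
  qed
  have hc: "(\<Sum>q\<in>I. \<alpha> q * kk q i) = (\<Sum>j\<in>I. kk i j * \<beta> j)"
  proof -
    have "(\<Sum>q\<in>I. \<alpha> q * kk q i) = (\<Sum>q\<in>I. \<Sum>j\<in>I. kk i j * (Ki j q * kk q i))"
      unfolding \<alpha>_def by (simp add: sum_distrib_right mult.assoc)
    also have "\<dots> = (\<Sum>j\<in>I. \<Sum>q\<in>I. kk i j * (Ki j q * kk q i))" by (rule sum.swap)
    also have "\<dots> = (\<Sum>j\<in>I. kk i j * \<beta> j)" unfolding \<beta>_def by (simp add: sum_distrib_left)
    finally show ?thesis .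
  qed
  have Dnz: "D a b \<noteq> 0" if "a \<in> {1..n}" "b \<in> {1..n}" for a b
    using denom that unfolding D_def by (auto split: if_splits)
  have bilD: "bil m (v a) (u b) = D a b * kk a b" if "a \<in> {1..n}" "b \<in> {1..n}" for a b
    using Dnz[OF that] unfolding kk_def kcoef_def D_def by (auto split: if_splits)
  have snz: "disc \<Longrightarrow> s a \<noteq> 0" if "a \<in> {1..n}" for a using s_nz that by auto
  have P: "bil m (V a) (u b) = (x a + y b) * kk a b" if "a \<in> insert i I" "b \<in> insert i I" for a b
  proof -
    have ab: "a \<in> {1..n}" "b \<in> {1..n}" using that I_sub by auto
    have "bil m (V a) (u b) = s a powi (- eta) * (D a b * kk a b)"
      unfolding V_def by (simp add: bil_scal_l bilD[OF ab])
    then show ?thesis using snz[OF ab(1)]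
      by (cases disc) (auto simp: eta_def D_def x_def y_def power_int_minus field_simps)
  qed
  have core_app: "bil m (\<lambda>c. V i c - (\<Sum>q\<in>I. \<alpha> q * V q c)) (\<lambda>c. u i c - (\<Sum>j\<in>I. \<beta> j * u j c))
     = (x i + y i) * (kk i i - (\<Sum>j\<in>I. kk i j * \<beta> j))"
    by (rule core[OF P ha hb hc])
  have eqV: "(\<Sum>j=1..i-1. \<Sum>q=1..i-1. kk i j * mat_inv K1 $$ (j - 1, q - 1) * s q powi (- eta) * v q c)
      = (\<Sum>q\<in>I. \<alpha> q * V q c)" for c
  proof -
    have "(\<Sum>j=1..i-1. \<Sum>q=1..i-1. kk i j * mat_inv K1 $$ (j - 1, q - 1) * s q powi (- eta) * v q c)
       = (\<Sum>j\<in>I. \<Sum>q\<in>I. (kk i j * Ki j q) * V q c)"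
      unfolding I_def N_def Ki_def V_def by (simp add: mult.assoc)
    also have "\<dots> = (\<Sum>q\<in>I. \<Sum>j\<in>I. (kk i j * Ki j q) * V q c)" by (rule sum.swap)
    also have "\<dots> = (\<Sum>q\<in>I. \<alpha> q * V q c)" unfolding \<alpha>_def by (simp add: sum_distrib_right)
    finally show ?thesis .
  qed
  have eqU: "(\<Sum>j=1..i-1. \<Sum>q=1..i-1. u j c * mat_inv K1 $$ (j - 1, q - 1) * kk q i)
      = (\<Sum>j\<in>I. \<beta> j * u j c)" for c
    unfolding I_def N_def \<beta>_def Ki_def by (simp add: sum_distrib_left sum_distrib_right mult.commute mult.left_commute)
  have eqC: "(\<Sum>j=1..i-1. \<Sum>q=1..i-1. kk i j * mat_inv K1 $$ (j - 1, q - 1) * kk q i)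
      = (\<Sum>j\<in>I. kk i j * \<beta> j)"
    unfolding I_def N_def \<beta>_def Ki_def by (simp add: sum_distrib_left mult.assoc)
  have iI: "i \<in> {1..n}" using i_range .
  have sii: "s i powi eta * (x i + y i) = D i i"
    using snz[OF iI] by (cases disc) (auto simp: eta_def D_def x_def y_def field_simps)
  have "bil m
      (\<lambda>c. s i powi eta * (s i powi (- eta) * v i c
          - (\<Sum>j=1..i-1. \<Sum>q=1..i-1. kk i j * mat_inv K1 $$ (j - 1, q - 1) * s q powi (- eta) * v q c)))
      (\<lambda>c. u i c - (\<Sum>j=1..i-1. \<Sum>q=1..i-1. u j c * mat_inv K1 $$ (j - 1, q - 1) * kk q i))
    = s i powi eta * bil m (\<lambda>c. V i c - (\<Sum>q\<in>I. \<alpha> q * V q c)) (\<lambda>c. u i c - (\<Sum>j\<in>I. \<beta> j * u j c))"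
    unfolding eqV eqU by (simp add: bil_scal_l V_def)
  also have "\<dots> = D i i * (kk i i - (\<Sum>j\<in>I. kk i j * \<beta> j))"
    unfolding core_app by (simp add: sii[symmetric])
  also have "\<dots> = (1 / kk i i) * (kk i i - (\<Sum>j=1..i-1. \<Sum>q=1..i-1. kk i j * mat_inv K1 $$ (j - 1, q - 1) * kk q i))
      * bil m (v i) (u i)"
    unfolding eqC bilD[OF iI iI] using kii by (simp add: field_simps)
  finally show ?thesis .
qed

end
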